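(* Let $0<\alpha<\beta$ and define $T\colon\mathbb R\to\mathbb R$ by $Tx=x-\alpha$ if $x\le\alpha$, $Tx=0$ if $\alpha<x\le\beta$, and $Tx=x-\beta$ if $x>\beta$. Then $T$ is firmly nonexpansive and not affine, $v:=P_{\overline{\operatorname{ran}}(\mathrm{Id}-T)}0=\alpha$, $\operatorname{Fix}(v+T)=\left]-\infty,\alpha\right]$, $\operatorname{Fix}(T_{-v})=\left]-\infty,0\right]$, and for all $n\in\mathbb N$ and $x\in\mathbb R$: $T^nx+nv=x$ if $x\le\alpha$; $=\alpha$ if $\alpha<x\le\beta$; $=x-n(\beta-\alpha)$ if $x>\beta$ and $n\le\lfloor x/\beta\rfloor$; $=\min\{\alpha,x-\lfloor x/\beta\rfloor\beta\}+\lfloor x/\beta\rfloor\alpha$ if $x>\beta$ and $n>\lfloor x/\beta\rfloor$. Consequently, for every $x_0\in\mathbb R$ the sequence $(T^nx_0+nv)_n$ is eventually constant, with limit $x_0$ if $x_0\le\alpha$, $\alpha$ if $\alpha<x_0\le\beta$, and $\min\{\alpha,x_0-\lfloor x_0/\beta\rfloor\beta\}+\alpha\lfloor x_0/\beta\rfloor$ if $x_0>\beta$; and for every $x_0>\beta$ this limit does not belong to $\operatorname{Fix}(v+T)$.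
   Context: $T_{-v}x:=T(x+v)$, $(v+T)x:=v+Tx$, $\operatorname{Fix}$ denotes the fixed point set, and $\overline{\operatorname{ran}}(\mathrm{Id}-T)$ the closure of the range of $\mathrm{Id}-T$. *)

theory Defs
  imports "HOL-Analysis.Analysis"
begin

definition firmly_nonexpansive :: "('a::real_inner \<Rightarrow> 'a) \<Rightarrow> bool" where
  "firmly_nonexpansive T \<longleftrightarrow>
     (\<forall>x y. (norm (T x - T y))\<^sup>2 \<le> (T x - T y) \<bullet> (x - y))"

definition affine_op :: "('a::real_vector \<Rightarrow> 'b::real_vector) \<Rightarrow> bool" where
  "affine_op T \<longleftrightarrow>
     (\<forall>x y (l::real). T (l *\<^sub>R x + (1 - l) *\<^sub>R y) = l *\<^sub>R T x + (1 - l) *\<^sub>R T y)"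

definition Fix :: "('a \<Rightarrow> 'a) \<Rightarrow> 'a set" where
  "Fix T = {x. T x = x}"

definition min_disp :: "('a::euclidean_space \<Rightarrow> 'a) \<Rightarrow> 'a" where
  "min_disp T = closest_point (closure (range (\<lambda>x. x - T x))) 0"

end

theory Submission
  imports Defs
begin

lemma it_low:
  assumes T_def: "T = (\<lambda>x::real. if x \<le> \<alpha> then x - \<alpha> else if x \<le> \<beta> then 0 else x - \<beta>)"
    and "0 < \<alpha>" and "y \<le> \<alpha>"
  shows "(T ^^ n) y = y - real n * \<alpha>"
proof (induction n)
  case 0 then show ?case by simp
next
  case (Suc n)
  have "0 \<le> real n * \<alpha>" using assms(2) by simp
  hence "y - real n * \<alpha> \<le> \<alpha>" using assms(3) by linarith
  hence "(T ^^ n) y \<le> \<alpha>" using Suc.IH by simp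
  then show ?case using Suc.IH by (simp add: T_def algebra_simps)
qed

lemma it_mid:
  assumes T_def: "T = (\<lambda>x::real. if x \<le> \<alpha> then x - \<alpha> else if x \<le> \<beta> then 0 else x - \<beta>)"
    and "0 < \<alpha>" and "\<alpha> < y" "y \<le> \<beta>" "n \<ge> 1"
  shows "(T ^^ n) y + real n * \<alpha> = \<alpha>"
proof -
  obtain m where m: "n = Suc m" using assms(5) by (cases n) auto
  have "T y = 0" using assms by simp
  hence "(T ^^ n) y = (T ^^ m) 0" by (simp only: m funpow_Suc_right comp_def)
  also have "\<dots> = 0 - real m * \<alpha>" using it_low[OF T_def assms(2)] assms(2) by simp
  finally show ?thesis using m by (simp add: algebra_simps)
qed

lemma it_high:
  assumes T_def: "T = (\<lambda>x::real. if x \<le> \<alpha> then x - \<alpha> else if x \<le> \<beta> then 0 else x - \<beta>)"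
    and "0 < \<alpha>" "\<alpha> < \<beta>" "real j * \<beta> \<le> x"
  shows "(T ^^ j) x = x - real j * \<beta>"
  using assms(4)
proof (induction j)
  case 0 then show ?case by simp
next
  case (Suc j)
  have h: "real j * \<beta> \<le> x" using Suc.prems assms by (simp add: algebra_simps)
  have "x - real j * \<beta> \<ge> \<beta>" using Suc.prems by (simp add: algebra_simps)
  then show ?case using Suc.IH[OF h] assms by (auto simp: T_def algebra_simps)
qed

theorem mainTheorem5:
  fixes \<alpha> \<beta> :: real and T :: "real \<Rightarrow> real"
  assumes "0 < \<alpha>" and "\<alpha> < \<beta>"
    and T_def: "T = (\<lambda>x. if x \<le> \<alpha> then x - \<alpha> else if x \<le> \<beta> then 0 else x - \<beta>)"
  defines "v \<equiv> min_disp T"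
  defines "L \<equiv> (\<lambda>x0::real. if x0 \<le> \<alpha> then x0 else if x0 \<le> \<beta> then \<alpha>
                 else min \<alpha> (x0 - of_int \<lfloor>x0 / \<beta>\<rfloor> * \<beta>) + \<alpha> * of_int \<lfloor>x0 / \<beta>\<rfloor>)"
  shows "firmly_nonexpansive T
    \<and> \<not> affine_op T
    \<and> v = \<alpha>
    \<and> Fix (\<lambda>x. v + T x) = {..\<alpha>}
    \<and> Fix (\<lambda>x. T (x + v)) = {..0}
    \<and> (\<forall>(n::nat) (x::real). n \<ge> 1 \<longrightarrow>
         (x \<le> \<alpha> \<longrightarrow> (T ^^ n) x + real n * v = x)
       \<and> (\<alpha> < x \<and> x \<le> \<beta> \<longrightarrow> (T ^^ n) x + real n * v = \<alpha>)
       \<and> (\<beta> < x \<and> int n \<le> \<lfloor>x / \<beta>\<rfloor> \<longrightarrow> (T ^^ n) x + real n * v = x - real n * (\<beta> - \<alpha>))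
       \<and> (\<beta> < x \<and> int n > \<lfloor>x / \<beta>\<rfloor> \<longrightarrow> (T ^^ n) x + real n * v
              = min \<alpha> (x - of_int \<lfloor>x / \<beta>\<rfloor> * \<beta>) + of_int \<lfloor>x / \<beta>\<rfloor> * \<alpha>))
    \<and> (\<forall>x0::real. (\<exists>N. \<forall>n\<ge>N. (T ^^ n) x0 + real n * v = L x0)
                  \<and> (\<lambda>n. (T ^^ n) x0 + real n * v) \<longlonglongrightarrow> L x0)
    \<and> (\<forall>x0::real. x0 > \<beta> \<longrightarrow> L x0 \<notin> Fix (\<lambda>x. v + T x))"
proof -
  have a0: "0 < \<alpha>" and ab: "\<alpha> < \<beta>" by fact+
  have b0: "0 < \<beta>" using a0 ab by simp
  have mono: "T x \<le> T y \<and> x - T x \<le> y - T y" if "x \<le> y" for x y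
    using that a0 ab by (auto simp: T_def)
  have FN: "firmly_nonexpansive T"
    unfolding firmly_nonexpansive_def
  proof (intro allI)
    fix x y :: real
    have key: "(T x - T y)^2 \<le> (T x - T y) * (x - y)"
    proof (cases "x \<le> y")
      case True
      with mono[OF True] have "0 \<le> (T y - T x) * ((y - x) - (T y - T x))"
        by (intro mult_nonneg_nonneg) auto
      then show ?thesis by (simp add: power2_eq_square algebra_simps)
    next
      case False
      hence le: "y \<le> x" by simp
      with mono[OF le] have "0 \<le> (T x - T y) * ((x - y) - (T x - T y))"
        by (intro mult_nonneg_nonneg) auto
      then show ?thesis by (simp add: power2_eq_square algebra_simps)
    qed
    show "(norm (T x - T y))\<^sup>2 \<le> (T x - T y) \<bullet> (x - y)"
      using key by simp
  qed
  have NA: "\<not> affine_op T"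
  proof
    assume "affine_op T"
    hence "T ((1/2) *\<^sub>R 0 + (1 - 1/2) *\<^sub>R (2*\<beta>)) = (1/2) *\<^sub>R T 0 + (1 - 1/2) *\<^sub>R T (2*\<beta>)"
      unfolding affine_op_def by blast
    then show False using a0 ab by (simp add: T_def split: if_splits)
  qed
  have rng: "range (\<lambda>x. x - T x) = {\<alpha>..\<beta>}"
  proof
    show "range (\<lambda>x. x - T x) \<subseteq> {\<alpha>..\<beta>}" using a0 ab by (auto simp: T_def)
    show "{\<alpha>..\<beta>} \<subseteq> range (\<lambda>x. x - T x)"
    proof
      fix z assume z: "z \<in> {\<alpha>..\<beta>}"
      have "z - T z = z" if "\<alpha> < z" using that z by (simp add: T_def)
      moreover have "\<alpha> - T \<alpha> = \<alpha>" by (simp add: T_def)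
      ultimately have "z = (if z = \<alpha> then \<alpha> - T \<alpha> else z - T z)" using z by auto
      then show "z \<in> range (\<lambda>x. x - T x)" by (metis rangeI)
    qed
  qed
  have V: "v = \<alpha>"
  proof -
    have "\<alpha> = closest_point {\<alpha>..\<beta>} 0"
      by (rule closest_point_unique) (use a0 ab in \<open>auto simp: dist_real_def\<close>)
    then show ?thesis unfolding v_def min_disp_def rng by simp
  qed
  have F1: "Fix (\<lambda>x. v + T x) = {..\<alpha>}"
    unfolding V Fix_def using a0 ab by (auto simp: T_def)
  have F2: "Fix (\<lambda>x. T (x + v)) = {..0}"
    unfolding V Fix_def using a0 ab by (auto simp: T_def)
  have hi: "(T ^^ n) x + real n * \<alpha> = x - real n * (\<beta> - \<alpha>)" if "real n * \<beta> \<le> x" for n x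
    using it_high[OF T_def a0 ab that] by (simp add: algebra_simps)
  have fl: "of_int \<lfloor>x / \<beta>\<rfloor> * \<beta> \<le> x" "x < (of_int \<lfloor>x / \<beta>\<rfloor> + 1) * \<beta>" for x
  proof -
    have "of_int \<lfloor>x / \<beta>\<rfloor> \<le> x / \<beta>" by simp
    hence "of_int \<lfloor>x / \<beta>\<rfloor> * \<beta> \<le> x / \<beta> * \<beta>" by (rule mult_right_mono) (use b0 in simp)
    thus "of_int \<lfloor>x / \<beta>\<rfloor> * \<beta> \<le> x" using b0 by simp
    have "x / \<beta> < of_int \<lfloor>x / \<beta>\<rfloor> + 1" by linarith
    hence "x / \<beta> * \<beta> < (of_int \<lfloor>x / \<beta>\<rfloor> + 1) * \<beta>" by (rule mult_strict_right_mono) (use b0 in simp)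
    thus "x < (of_int \<lfloor>x / \<beta>\<rfloor> + 1) * \<beta>" using b0 by simp
  qed
  have kpos: "\<lfloor>x / \<beta>\<rfloor> \<ge> 1" if "\<beta> < x" for x
  proof -
    have "1 \<le> x / \<beta>" using that b0 by simp
    thus ?thesis by linarith
  qed
  have big: "(T ^^ n) x + real n * \<alpha> = min \<alpha> (x - of_int \<lfloor>x / \<beta>\<rfloor> * \<beta>) + of_int \<lfloor>x / \<beta>\<rfloor> * \<alpha>"
    if x: "\<beta> < x" and n: "int n > \<lfloor>x / \<beta>\<rfloor>" for n x
  proof -
    define K where "K = nat \<lfloor>x / \<beta>\<rfloor>"
    have Kk: "real K = of_int \<lfloor>x / \<beta>\<rfloor>" using kpos[OF x] by (simp add: K_def)
    have Kn: "K < n" using n kpos[OF x] unfolding K_def by linarith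
    define y where "y = x - real K * \<beta>"
    have y0: "0 \<le> y" and yb: "y < \<beta>" using fl[of x] unfolding y_def Kk by (auto simp: algebra_simps)
    have TK: "(T ^^ K) x = y" unfolding y_def
      by (rule it_high[OF T_def a0 ab]) (use fl[of x] Kk in simp)
    have "(T ^^ n) x = (T ^^ (n - K)) y"
      using Kn TK funpow_add[of "n - K" K T] by simp
    show ?thesis
    proof (cases "y \<le> \<alpha>")
      case True
      have "(T ^^ (n - K)) y = y - real (n - K) * \<alpha>" by (rule it_low[OF T_def a0 True])
      then show ?thesis using True \<open>(T ^^ n) x = _\<close> Kn Kk unfolding y_def
        by (simp add: of_nat_diff algebra_simps)
    next
      case False
      have "(T ^^ (n - K)) y + real (n - K) * \<alpha> = \<alpha>"
        by (rule it_mid[OF T_def a0]) (use False yb Kn in auto)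
      then show ?thesis using False \<open>(T ^^ n) x = _\<close> Kn Kk unfolding y_def
        by (simp add: of_nat_diff algebra_simps)
    qed
  qed
  have IT: "\<forall>(n::nat) (x::real). n \<ge> 1 \<longrightarrow>
         (x \<le> \<alpha> \<longrightarrow> (T ^^ n) x + real n * v = x)
       \<and> (\<alpha> < x \<and> x \<le> \<beta> \<longrightarrow> (T ^^ n) x + real n * v = \<alpha>)
       \<and> (\<beta> < x \<and> int n \<le> \<lfloor>x / \<beta>\<rfloor> \<longrightarrow> (T ^^ n) x + real n * v = x - real n * (\<beta> - \<alpha>))
       \<and> (\<beta> < x \<and> int n > \<lfloor>x / \<beta>\<rfloor> \<longrightarrow> (T ^^ n) x + real n * v
              = min \<alpha> (x - of_int \<lfloor>x / \<beta>\<rfloor> * \<beta>) + of_int \<lfloor>x / \<beta>\<rfloor> * \<alpha>)"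
  proof (intro allI impI conjI)
    fix n :: nat and x :: real assume n1: "n \<ge> 1"
    show "x \<le> \<alpha> \<Longrightarrow> (T ^^ n) x + real n * v = x"
      using it_low[OF T_def a0] V by simp
    show "\<alpha> < x \<and> x \<le> \<beta> \<Longrightarrow> (T ^^ n) x + real n * v = \<alpha>"
      using it_mid[OF T_def a0 _ _ n1] V by simp
    show "(T ^^ n) x + real n * v = x - real n * (\<beta> - \<alpha>)" if "\<beta> < x \<and> int n \<le> \<lfloor>x / \<beta>\<rfloor>"
    proof -
      have "real n \<le> of_int \<lfloor>x / \<beta>\<rfloor>" using that by linarith
      hence "real n * \<beta> \<le> of_int \<lfloor>x / \<beta>\<rfloor> * \<beta>" using b0 by simp
      then show ?thesis using hi fl[of x] V by force
    qed
    show "\<beta> < x \<and> int n > \<lfloor>x / \<beta>\<rfloor> \<Longrightarrow> (T ^^ n) x + real n * v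
              = min \<alpha> (x - of_int \<lfloor>x / \<beta>\<rfloor> * \<beta>) + of_int \<lfloor>x / \<beta>\<rfloor> * \<alpha>"
      using big V by simp
  qed
  have EV: "\<exists>N. \<forall>n\<ge>N. (T ^^ n) x0 + real n * v = L x0" for x0
  proof (cases "x0 \<le> \<beta>")
    case True
    show ?thesis
      by (rule exI[of _ 1]) (use IT True in \<open>auto simp: L_def\<close>)
  next
    case False
    show ?thesis
    proof (rule exI[of _ "nat \<lfloor>x0 / \<beta>\<rfloor> + 1"], intro allI impI)
      fix n assume "nat \<lfloor>x0 / \<beta>\<rfloor> + 1 \<le> n"
      hence "int n > \<lfloor>x0 / \<beta>\<rfloor>" by linarith
      then show "(T ^^ n) x0 + real n * v = L x0"
        using big[of x0 n] False V a0 ab by (simp add: L_def algebra_simps)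
    qed
  qed
  have LIM: "(\<lambda>n. (T ^^ n) x0 + real n * v) \<longlonglongrightarrow> L x0" for x0
    by (rule tendsto_eventually) (use EV[of x0] in \<open>simp add: eventually_sequentially\<close>)
  have NF: "L x0 \<notin> Fix (\<lambda>x. v + T x)" if "x0 > \<beta>" for x0
  proof -
    define k where "k = \<lfloor>x0 / \<beta>\<rfloor>"
    have k1: "k \<ge> 1" using kpos[OF that] k_def by simp
    have y0: "0 \<le> x0 - of_int k * \<beta>" using fl[of x0] k_def by simp
    have "L x0 > \<alpha>"
    proof (cases "k = 1")
      case True
      hence "x0 - of_int k * \<beta> > 0" using that by simp
      then show ?thesis using that ab a0 True unfolding L_def k_def[symmetric] by simp
    next
      case False
      hence "of_int k \<ge> (2::real)" using k1 by simp
      hence "\<alpha> * of_int k \<ge> \<alpha> * 2" using a0 by simp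
      moreover have "min \<alpha> (x0 - of_int k * \<beta>) \<ge> 0" using y0 a0 by simp
      ultimately have "\<alpha> < min \<alpha> (x0 - of_int k * \<beta>) + \<alpha> * of_int k" using a0 by linarith
      then show ?thesis using that ab a0 unfolding L_def k_def[symmetric] by simp
    qed
    then show ?thesis using F1 by simp
  qed
  show ?thesis using FN NA V F1 F2 IT EV LIM NF by blast
qed

end
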